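(* Let $n,k,r$ be integers with $k,r\geq 2$, $n\geq 2k$ and $k<r$. Then every vertex-$k$-maximal $r$-uniform hypergraph $H$ on $n$ vertices satisfies $|E(H)|\leq \binom{n}{r}-\binom{n-k}{r}$ (which equals $\binom{n}{r}-\binom{n-k}{r}+(\frac{n}{k}-2)\binom{k}{r}$ since $\binom{k}{r}=0$).
   Context: Binomial coefficients satisfy $\binom{a}{b}=0$ when $b>a$. A hypergraph $H=(V,E)$ consists of a finite vertex set $V$ and a set $E$ of non-empty subsets of $V$ (edges); it is $r$-uniform if all edges have exactly $r$ elements. The complement $H^c$ has as edges the $r$-subsets of $V$ not in $E$. A subhypergraph is $H'=(V',E')$ with $V'\subseteq V$, $E'\subseteq E$. $H+e=(V,E\cup\{e\})$ for $e\in E(H^c)$. $H-Y$ is the hypergraph induced on $V\setminus Y$ (keeping edges contained in $V\setminus Y$). Connectedness is defined via paths (alternating sequences of distinct vertices and distinct edges with consecutive vertices in the intermediate edge). A vertex-cut is a set $X$ with $H-X$ disconnected. $\kappa(H)$ is the minimum size of a vertex-cut if one exists, and $|V(H)|-1$ otherwise. $\overline{\kappa}(H)=\max\{\kappa(H'): H'\subseteq H\}$. An $r$-uniform hypergraph $H$ is vertex-$k$-maximal if $\overline{\kappa}(H)\leq k$ but $\overline{\kappa}(H+e)\geq k+1$ for every $e\in E(H^c)$. *)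

theory Defs
  imports Main
begin

definition hypergraph :: "'a set \<Rightarrow> 'a set set \<Rightarrow> bool" where
  "hypergraph V E \<longleftrightarrow> finite V \<and> (\<forall>e\<in>E. e \<noteq> {} \<and> e \<subseteq> V)"

definition uniform :: "nat \<Rightarrow> 'a set \<Rightarrow> 'a set set \<Rightarrow> bool" where
  "uniform r V E \<longleftrightarrow> hypergraph V E \<and> (\<forall>e\<in>E. card e = r)"

definition non_edges :: "nat \<Rightarrow> 'a set \<Rightarrow> 'a set set \<Rightarrow> 'a set set" where
  "non_edges r V E = {e. e \<subseteq> V \<and> card e = r \<and> e \<notin> E}"

definition is_path :: "'a set set \<Rightarrow> 'a list \<Rightarrow> 'a set list \<Rightarrow> bool" where
  "is_path E vs es \<longleftrightarrow> vs \<noteq> [] \<and> length es + 1 = length vs \<and> distinct vs \<and> distinct es \<and>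
     set es \<subseteq> E \<and> (\<forall>i < length es. vs ! i \<in> es ! i \<and> vs ! (Suc i) \<in> es ! i)"

definition connected_hg :: "'a set \<Rightarrow> 'a set set \<Rightarrow> bool" where
  "connected_hg V E \<longleftrightarrow> (\<forall>x\<in>V. \<forall>y\<in>V. \<exists>vs es. is_path E vs es \<and> hd vs = x \<and> last vs = y)"

definition del_verts_E :: "'a set \<Rightarrow> 'a set set \<Rightarrow> 'a set \<Rightarrow> 'a set set" where
  "del_verts_E V E Y = {e \<in> E. e \<subseteq> V - Y}"

definition vertex_cut :: "'a set \<Rightarrow> 'a set set \<Rightarrow> 'a set \<Rightarrow> bool" where
  "vertex_cut V E X \<longleftrightarrow> X \<subseteq> V \<and> \<not> connected_hg (V - X) (del_verts_E V E X)"

definition kappa :: "'a set \<Rightarrow> 'a set set \<Rightarrow> nat" where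
  "kappa V E = (if \<exists>X. vertex_cut V E X then Min {card X | X. vertex_cut V E X}
                else card V - 1)"

definition subhypergraph :: "'a set \<Rightarrow> 'a set set \<Rightarrow> 'a set \<Rightarrow> 'a set set \<Rightarrow> bool" where
  "subhypergraph V' E' V E \<longleftrightarrow> V' \<subseteq> V \<and> E' \<subseteq> E \<and> hypergraph V' E'"

definition kappa_bar :: "'a set \<Rightarrow> 'a set set \<Rightarrow> nat" where
  "kappa_bar V E = Max {kappa V' E' | V' E'. subhypergraph V' E' V E}"

definition vertex_k_maximal :: "nat \<Rightarrow> nat \<Rightarrow> 'a set \<Rightarrow> 'a set set \<Rightarrow> bool" where
  "vertex_k_maximal k r V E \<longleftrightarrow> uniform r V E \<and> kappa_bar V E \<le> k \<and>
     (\<forall>e \<in> non_edges r V E. kappa_bar V (insert e E) \<ge> k + 1)"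

end

theory Submission
  imports Defs
begin

lemma choose_superadd:
  assumes "s \<ge> 1" shows "(p choose s) + (q choose s) \<le> (p + q) choose s"
proof (induction q)
  case 0 then show ?case using assms by simp
next
  case (Suc q)
  obtain t where t: "s = Suc t" using assms by (cases s) auto
  have "q choose t \<le> (p + q) choose t" by (rule binomial_right_mono) simp
  then show ?case using Suc by (simp add: t)
qed

lemma choose_step:
  assumes "r = Suc s" "s \<ge> 1"
  shows "m choose r = ((m - 1) choose r) + ((m - 1) choose s)"
  using assms by (cases m) auto

lemma arith_key:
  assumes "r \<ge> 2"
  shows "((a - d) choose r) + ((b - d) choose r) + ((a + b) choose r)
     \<ge> ((a + b - d) choose r) + (a choose r) + (b choose r)"
proof (induction d)
  case 0 then show ?case by simp
next
  case (Suc d)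
  obtain s where s: "r = Suc s" "s \<ge> 1" using assms by (cases r) auto
  have e1: "(a - d) choose r = ((a - Suc d) choose r) + ((a - Suc d) choose s)"
    using choose_step[OF s, of "a - d"] by simp
  have e2: "(b - d) choose r = ((b - Suc d) choose r) + ((b - Suc d) choose s)"
    using choose_step[OF s, of "b - d"] by simp
  have e3: "(a + b - d) choose r = ((a + b - Suc d) choose r) + ((a + b - Suc d) choose s)"
    using choose_step[OF s, of "a + b - d"] by simp
  have "((a - Suc d) choose s) + ((b - Suc d) choose s) \<le> ((a - Suc d) + (b - Suc d)) choose s"
    using choose_superadd s by blast
  also have "\<dots> \<le> (a + b - Suc d) choose s" by (rule binomial_right_mono) arith
  finally show ?case using Suc e1 e2 e3 by linarith
qed

lemma path_prefix:
  assumes "is_path E vs es" "i < length vs"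
  shows "is_path E (take (Suc i) vs) (take i es) \<and> hd (take (Suc i) vs) = hd vs \<and> last (take (Suc i) vs) = vs ! i"
proof -
  have L: "length vs = length es + 1" "vs \<noteq> []" using assms(1) unfolding is_path_def by auto
  have "last (take (Suc i) vs) = vs ! i" using assms(2)
    by (simp add: take_Suc_conv_app_nth)
  moreover have "hd (take (Suc i) vs) = hd vs" using L by (simp add: hd_take)
  moreover have "is_path E (take (Suc i) vs) (take i es)"
    using assms L unfolding is_path_def
    by (auto simp: min_def dest: in_set_takeD)
  ultimately show ?thesis by simp
qed

lemma path_extend:
  assumes "is_path E vs es" "last vs \<in> e" "w \<in> e" "w \<notin> set vs" "e \<in> E" "e \<notin> set es"
  shows "is_path E (vs @ [w]) (es @ [e]) \<and> hd (vs@[w]) = hd vs \<and> last (vs@[w]) = w"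
proof -
  have L: "length vs = length es + 1" "vs \<noteq> []" using assms(1) unfolding is_path_def by auto
  have lv: "last vs = vs ! length es" using L by (simp add: last_conv_nth)
  have "\<forall>i < length (es @ [e]). (vs @ [w]) ! i \<in> (es @ [e]) ! i \<and> (vs @ [w]) ! Suc i \<in> (es @ [e]) ! i"
  proof (intro allI impI)
    fix i assume "i < length (es @ [e])"
    then consider "i < length es" | "i = length es" by fastforce
    then show "(vs @ [w]) ! i \<in> (es @ [e]) ! i \<and> (vs @ [w]) ! Suc i \<in> (es @ [e]) ! i"
    proof cases
      case 1 then show ?thesis using assms(1) L unfolding is_path_def by (auto simp: nth_append)
    next
      case 2 then show ?thesis using L lv assms(2,3) by (auto simp: nth_append)
    qed
  qed
  then show ?thesis using assms L unfolding is_path_def by auto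
qed

lemma reach_closed:
  assumes "is_path E vs es" "hd vs = x" "last vs = u" "e \<in> E" "u \<in> e" "w \<in> e"
  shows "\<exists>vs' es'. is_path E vs' es' \<and> hd vs' = x \<and> last vs' = w"
proof (cases "w \<in> set vs")
  case True
  then obtain i where i: "i < length vs" "vs ! i = w" by (auto simp: in_set_conv_nth)
  then show ?thesis using path_prefix[OF assms(1) i(1)] assms(2) by metis
next
  case False
  have L: "length vs = length es + 1" "vs \<noteq> []" using assms(1) unfolding is_path_def by auto
  obtain i where i: "i < length vs" "vs ! i \<in> e" "e \<notin> set (take i es)"
  proof (cases "e \<in> set es")
    case True
    then obtain i where i: "i < length es" "es ! i = e" by (auto simp: in_set_conv_nth)
    have "vs ! i \<in> e" using assms(1) i unfolding is_path_def by auto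
    moreover have "e \<notin> set (take i es)"
    proof
      assume "e \<in> set (take i es)"
      then obtain j where "j < i" "es ! j = e" using i by (auto simp: in_set_conv_nth)
      moreover have "distinct es" using assms(1) unfolding is_path_def by auto
      ultimately show False using i nth_eq_iff_index_eq[of es j i] by auto
    qed
    ultimately show ?thesis using that[of i] i L by auto
  next
    case False
    have "vs ! length es = u" using assms(3) L by (simp add: last_conv_nth)
    then show ?thesis using that[of "length es"] L False assms(5) by (auto dest: in_set_takeD)
  qed
  have P: "is_path E (take (Suc i) vs) (take i es)" "hd (take (Suc i) vs) = x" "last (take (Suc i) vs) = vs ! i"
    using path_prefix[OF assms(1) i(1)] assms(2) by auto
  have "w \<notin> set (take (Suc i) vs)" using False by (auto dest: in_set_takeD)
  from path_extend[OF P(1) _ assms(6) this assms(4) i(3)] P i(2)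
  show ?thesis by metis
qed

definition Rs :: "nat \<Rightarrow> 'a set \<Rightarrow> 'a set set" where "Rs r S = {e. e \<subseteq> S \<and> card e = r}"
definition Pk :: "nat \<Rightarrow> 'a set \<Rightarrow> 'a set set \<Rightarrow> bool" where
  "Pk k V E \<longleftrightarrow> (\<forall>V' E'. subhypergraph V' E' V E \<longrightarrow> kappa V' E' \<le> k)"

lemma Rs_mono: "S \<subseteq> T \<Longrightarrow> Rs r S \<subseteq> Rs r T"
  unfolding Rs_def by auto

lemma card_Rs: "finite S \<Longrightarrow> card (Rs r S) = card S choose r"
  unfolding Rs_def by (rule n_subsets)

lemma finite_Rs: "finite S \<Longrightarrow> finite (Rs r S)"
  unfolding Rs_def by (rule finite_subset[of _ "Pow S"]) auto

lemma cut_exists: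
  assumes "hypergraph V E" "kappa V E \<le> k" "card V \<ge> k + 2"
  shows "\<exists>X. vertex_cut V E X \<and> card X \<le> k"
proof (cases "\<exists>X. vertex_cut V E X")
  case False
  then have "kappa V E = card V - 1" unfolding kappa_def by auto
  then show ?thesis using assms by auto
next
  case True
  let ?S = "{card X | X. vertex_cut V E X}"
  have fin: "finite V" using assms(1) unfolding hypergraph_def by auto
  have "?S \<subseteq> {0..card V}" using fin unfolding vertex_cut_def by (auto intro: card_mono)
  then have "finite ?S" by (rule finite_subset) simp
  moreover have "?S \<noteq> {}" using True by auto
  ultimately have "Min ?S \<in> ?S" by (rule Min_in)
  moreover have "kappa V E = Min ?S" using True unfolding kappa_def by auto
  ultimately show ?thesis using assms(2) by auto
qed

lemma split_cut:
  assumes "vertex_cut V E X"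
  shows "\<exists>A B. A \<union> B = V - X \<and> A \<inter> B = {} \<and> A \<noteq> {} \<and> B \<noteq> {} \<and>
     (\<forall>e\<in>E. e \<subseteq> V - X \<longrightarrow> e \<subseteq> A \<or> e \<subseteq> B)"
proof -
  define FX where "FX = del_verts_E V E X"
  have nc: "\<not> connected_hg (V - X) FX" using assms unfolding vertex_cut_def FX_def by simp
  obtain x y where xy: "x \<in> V - X" "y \<in> V - X"
    "\<not> (\<exists>vs es. is_path FX vs es \<and> hd vs = x \<and> last vs = y)"
    using nc unfolding connected_hg_def by blast
  define A where "A = {v \<in> V - X. \<exists>vs es. is_path FX vs es \<and> hd vs = x \<and> last vs = v}"
  define B where "B = V - X - A"
  have p0: "is_path FX [x] []" unfolding is_path_def by simp
  have "\<exists>vs es. is_path FX vs es \<and> hd vs = x \<and> last vs = x"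
    using p0 by (intro exI[of _ "[x]"] exI[of _ "[]"]) simp
  then have xA: "x \<in> A" using xy(1) unfolding A_def by simp
  have yB: "y \<notin> A" using xy(3) unfolding A_def by simp
  then have yB: "y \<in> B" using xy(2) unfolding B_def by simp
  have cl: "e \<subseteq> A \<or> e \<subseteq> B" if "e \<in> E" "e \<subseteq> V - X" for e
  proof (cases "e \<inter> A = {}")
    case True then show ?thesis using that unfolding B_def by blast
  next
    case False
    then obtain u where u: "u \<in> e" "u \<in> A" by blast
    then obtain vs es where p: "is_path FX vs es" "hd vs = x" "last vs = u" unfolding A_def by blast
    have eX: "e \<in> FX" using that unfolding del_verts_E_def FX_def by simp
    have "e \<subseteq> A"
    proof
      fix w assume w: "w \<in> e"
      have "\<exists>vs' es'. is_path FX vs' es' \<and> hd vs' = x \<and> last vs' = w"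
        by (rule reach_closed[OF p eX u(1) w])
      moreover have "w \<in> V - X" using w that(2) by blast
      ultimately show "w \<in> A" unfolding A_def by simp
    qed
    then show ?thesis by simp
  qed
  have "A \<subseteq> V - X" unfolding A_def by blast
  then have 1: "A \<union> B = V - X" "A \<inter> B = {}" unfolding B_def by blast+
  have ne: "A \<noteq> {}" "B \<noteq> {}" using xA yB by blast+
  have cl': "\<forall>e\<in>E. e \<subseteq> V - X \<longrightarrow> e \<subseteq> A \<or> e \<subseteq> B" using cl by blast
  show ?thesis
    apply (rule exI[of _ A])
    apply (rule exI[of _ B])
    using 1 ne cl' by (intro conjI)
qed

lemma main:
  assumes "hypergraph V E" "Pk k V E" "k < r" "2 \<le> r"
  shows "(card V - k) choose r \<le> card (Rs r V - E)"
  using assms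
proof (induction "card V" arbitrary: V E rule: less_induct)
  case less
  have finV: "finite V" using less.prems(1) unfolding hypergraph_def by auto
  show ?case
  proof (cases "card V \<le> k + 1")
    case True
    then have "card V - k < r" using less.prems by linarith
    then show ?thesis by (simp add: binomial_eq_0)
  next
    case False
    have "subhypergraph V E V E" using less.prems(1) unfolding subhypergraph_def by auto
    then have "kappa V E \<le> k" using less.prems(2) unfolding Pk_def by auto
    then obtain X where X: "vertex_cut V E X" "card X \<le> k"
      using cut_exists[OF less.prems(1)] False by fastforce
    obtain A B where AB: "A \<union> B = V - X" "A \<inter> B = {}" "A \<noteq> {}" "B \<noteq> {}"
      "\<forall>e\<in>E. e \<subseteq> V - X \<longrightarrow> e \<subseteq> A \<or> e \<subseteq> B"
      using split_cut[OF X(1)] by blast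
    have XV: "X \<subseteq> V" using X(1) unfolding vertex_cut_def by auto
    have finA: "finite A" "finite B" "finite X" using AB(1) finV XV
      by (metis Un_upper1 Un_upper2 Diff_subset finite_subset)+
    have cV: "card V = card A + card B + card X"
    proof -
      have "V = (A \<union> B) \<union> X" using AB(1) XV by auto
      moreover have "card (A \<union> B) = card A + card B" using AB(2) finA by (simp add: card_Un_disjoint)
      moreover have "(A \<union> B) \<inter> X = {}" using AB(1) by auto
      ultimately show ?thesis using finA by (simp add: card_Un_disjoint)
    qed
    have cAX: "card (A \<union> X) = card A + card X" using AB(1) finA by (subst card_Un_disjoint) auto
    have cBX: "card (B \<union> X) = card B + card X" using AB(1) finA by (subst card_Un_disjoint) auto
    have sub: "(S \<subset> V \<and> hypergraph S {e\<in>E. e \<subseteq> S} \<and> Pk k S {e\<in>E. e \<subseteq> S}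
               \<and> Rs r S - {e\<in>E. e \<subseteq> S} = Rs r S - E)"
      if "S \<subseteq> V" "S \<noteq> V" for S
    proof -
      have h: "hypergraph S {e\<in>E. e \<subseteq> S}" using less.prems(1) finV that
        unfolding hypergraph_def by (auto intro: finite_subset)
      moreover have "Pk k S {e\<in>E. e \<subseteq> S}"
        using less.prems(2) that unfolding Pk_def subhypergraph_def by blast
      moreover have "Rs r S - {e\<in>E. e \<subseteq> S} = Rs r S - E" unfolding Rs_def by auto
      ultimately show ?thesis using that by auto
    qed
    have AXV: "A \<union> X \<subseteq> V" "A \<union> X \<noteq> V" using AB XV by auto
    have BXV: "B \<union> X \<subseteq> V" "B \<union> X \<noteq> V" using AB XV by auto
    have IH: "(card S - k) choose r \<le> card (Rs r S - E)" if "S \<subseteq> V" "S \<noteq> V" for S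
    proof -
      have c: "card S < card V" using that finV by (meson psubset_card_mono psubsetI)
      have h: "hypergraph S {e\<in>E. e \<subseteq> S}" "Pk k S {e\<in>E. e \<subseteq> S}"
        "Rs r S - {e\<in>E. e \<subseteq> S} = Rs r S - E" using sub[OF that] by auto
      have "(card S - k) choose r \<le> card (Rs r S - {e\<in>E. e \<subseteq> S})"
        by (rule less.hyps[OF c h(1,2) less.prems(3,4)])
      then show ?thesis unfolding h(3) .
    qed
    have IH1: "(card (A \<union> X) - k) choose r \<le> card (Rs r (A \<union> X) - E)" using IH[OF AXV] .
    have IH2: "(card (B \<union> X) - k) choose r \<le> card (Rs r (B \<union> X) - E)" using IH[OF BXV] .
    define N1 where "N1 = Rs r (A \<union> X) - E"
    define N2 where "N2 = Rs r (B \<union> X) - E"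
    define N3 where "N3 = Rs r (A \<union> B) - (Rs r A \<union> Rs r B)"
    have c3: "card N3 + (card A choose r) + (card B choose r) = (card A + card B) choose r"
    proof -
      have d: "Rs r A \<inter> Rs r B = {}"
      proof -
        { fix e assume "e \<subseteq> A" "e \<subseteq> B" "card e = r"
          then have "e = {}" using AB(2) by auto
          then have False using \<open>card e = r\<close> less.prems(4) by simp }
        then show ?thesis unfolding Rs_def by blast
      qed
      have s: "Rs r A \<union> Rs r B \<subseteq> Rs r (A \<union> B)" unfolding Rs_def by auto
      have "card (Rs r A \<union> Rs r B) = card (Rs r A) + card (Rs r B)"
        using d finA by (simp add: card_Un_disjoint finite_Rs)
      moreover have "card N3 = card (Rs r (A \<union> B)) - card (Rs r A \<union> Rs r B)"
        unfolding N3_def using s finA by (simp add: card_Diff_subset finite_Rs)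
      moreover have "card (Rs r (A \<union> B)) \<ge> card (Rs r A \<union> Rs r B)"
        using s finA by (simp add: card_mono finite_Rs)
      moreover have "card (A \<union> B) = card A + card B" using AB(2) finA by (simp add: card_Un_disjoint)
      ultimately show ?thesis using finA by (simp add: card_Rs)
    qed
    have N3E: "N3 \<inter> E = {}"
    proof -
      { fix e assume "e \<in> N3" "e \<in> E"
        then have "e \<subseteq> V - X" "card e = r" "e \<notin> Rs r A" "e \<notin> Rs r B"
          using AB(1) unfolding N3_def Rs_def by auto
        then have False using AB(5) \<open>e \<in> E\<close> unfolding Rs_def by blast }
      then show ?thesis by blast
    qed
    have d12: "N1 \<inter> N2 = {}"
    proof -
      { fix e assume "e \<in> N1" "e \<in> N2"
        then have "e \<subseteq> X" "card e = r" using AB(1,2) unfolding N1_def N2_def Rs_def by auto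
        then have "r \<le> card X" using finA by (metis card_mono)
        then have False using X(2) less.prems(3) by linarith }
      then show ?thesis by blast
    qed
    have XAB: "X \<inter> (A \<union> B) = {}" using AB(1) by auto
    have d13: "N1 \<inter> N3 = {}" "N2 \<inter> N3 = {}"
    proof -
      { fix e assume e: "e \<subseteq> A \<union> X" "e \<subseteq> A \<union> B" "card e = r" "e \<notin> Rs r A"
        have "e \<subseteq> A" using e(1,2) XAB by blast
        then have False using e(3,4) unfolding Rs_def by blast }
      then show "N1 \<inter> N3 = {}" unfolding N1_def N3_def Rs_def by blast
      { fix e assume e: "e \<subseteq> B \<union> X" "e \<subseteq> A \<union> B" "card e = r" "e \<notin> Rs r B"
        have "e \<subseteq> B" using e(1,2) XAB by blast
        then have False using e(3,4) unfolding Rs_def by blast }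
      then show "N2 \<inter> N3 = {}" unfolding N2_def N3_def Rs_def by blast
    qed
    have s1: "N1 \<subseteq> Rs r V - E" unfolding N1_def using Rs_mono[OF AXV(1)] by (rule Diff_mono) simp
    have s2: "N2 \<subseteq> Rs r V - E" unfolding N2_def using Rs_mono[OF BXV(1)] by (rule Diff_mono) simp
    have "A \<union> B \<subseteq> V" using AB(1) by blast
    then have "N3 \<subseteq> Rs r V" unfolding N3_def using Rs_mono by blast
    then have s3: "N3 \<subseteq> Rs r V - E" using N3E by blast
    have sN: "N1 \<union> N2 \<union> N3 \<subseteq> Rs r V - E" using s1 s2 s3 by blast
    have finN: "finite N1" "finite N2" "finite N3" unfolding N1_def N2_def N3_def
      using finA by (auto simp: finite_Rs)
    have "card N1 + card N2 + card N3 = card (N1 \<union> N2 \<union> N3)"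
      using finN d12 d13 by (simp add: card_Un_disjoint Int_Un_distrib2)
    also have "\<dots> \<le> card (Rs r V - E)"
      using sN finV by (simp add: card_mono finite_Rs)
    finally have tot: "card N1 + card N2 + card N3 \<le> card (Rs r V - E)" .
    define d where "d = k - card X"
    have e1: "card (A \<union> X) - k = card A - d" using cAX X(2) unfolding d_def by simp
    have e2: "card (B \<union> X) - k = card B - d" using cBX X(2) unfolding d_def by simp
    have e3: "card V - k = card A + card B - d" using cV X(2) unfolding d_def by simp
    note key = arith_key[OF less.prems(4), where a="card A" and d=d and b="card B"]
    have i1: "(card A - d) choose r \<le> card N1" using IH1 unfolding e1 N1_def .
    have i2: "(card B - d) choose r \<le> card N2" using IH2 unfolding e2 N2_def .
    have "(card A + card B - d) choose r \<le> card (Rs r V - E)" using i1 i2 tot c3 key by linarith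
    then show ?thesis unfolding e3 .
  qed
qed


lemma kappa_le:
  assumes "hypergraph V E" shows "kappa V E \<le> card V"
proof (cases "\<exists>X. vertex_cut V E X")
  case False then show ?thesis unfolding kappa_def by auto
next
  case True
  let ?S = "{card X | X. vertex_cut V E X}"
  have fin: "finite V" using assms unfolding hypergraph_def by auto
  have "?S \<subseteq> {0..card V}" using fin unfolding vertex_cut_def by (auto intro: card_mono)
  then have "finite ?S" by (rule finite_subset) simp
  moreover have "?S \<noteq> {}" using True by auto
  ultimately have "Min ?S \<in> ?S" by (rule Min_in)
  then have "Min ?S \<le> card V" using \<open>?S \<subseteq> {0..card V}\<close> by auto
  moreover have "kappa V E = Min ?S" using True unfolding kappa_def by auto
  ultimately show ?thesis by simp
qed

lemma Pk_of_kappa_bar: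
  assumes "hypergraph V E" "kappa_bar V E \<le> k" shows "Pk k V E"
  unfolding Pk_def
proof (intro allI impI)
  fix V' E' assume s: "subhypergraph V' E' V E"
  let ?T = "{kappa V' E' | V' E'. subhypergraph V' E' V E}"
  have fin: "finite V" using assms(1) unfolding hypergraph_def by auto
  have "?T \<subseteq> {0..card V}"
  proof
    fix t assume "t \<in> ?T"
    then obtain V1 E1 where t: "t = kappa V1 E1" "subhypergraph V1 E1 V E" by blast
    have "t \<le> card V1" using t kappa_le unfolding subhypergraph_def by blast
    also have "card V1 \<le> card V" using t(2) fin unfolding subhypergraph_def by (simp add: card_mono)
    finally show "t \<in> {0..card V}" by simp
  qed
  then have "finite ?T" by (rule finite_subset) simp
  moreover have "kappa V' E' \<in> ?T" using s by blast
  ultimately have "kappa V' E' \<le> Max ?T" by (rule Max_ge)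
  then show "kappa V' E' \<le> k" using assms(2) unfolding kappa_bar_def by simp
qed

theorem theorem4p2:
  fixes n k r :: nat and V :: "'a set" and E :: "'a set set"
  assumes "k \<ge> 2" and "r \<ge> 2" and "n \<ge> 2 * k" and "k < r"
    and "uniform r V E" and "card V = n"
    and "vertex_k_maximal k r V E"
  shows "card E \<le> (n choose r) - ((n - k) choose r)"
proof -
  have h: "hypergraph V E" and cE: "\<forall>e\<in>E. card e = r" using assms(5) unfolding uniform_def by auto
  have fin: "finite V" using h unfolding hypergraph_def by auto
  have ER: "E \<subseteq> Rs r V" using h cE unfolding hypergraph_def Rs_def by auto
  have "kappa_bar V E \<le> k" using assms(7) unfolding vertex_k_maximal_def by auto
  then have P: "Pk k V E" using Pk_of_kappa_bar h by blast
  have m: "(card V - k) choose r \<le> card (Rs r V - E)" using main[OF h P assms(4) assms(2)] .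
  have finR: "finite (Rs r V)" using fin by (rule finite_Rs)
  have "card (Rs r V - E) = card (Rs r V) - card E" using ER finR by (simp add: card_Diff_subset finite_subset)
  moreover have "card E \<le> card (Rs r V)" using ER finR by (simp add: card_mono)
  moreover have "card (Rs r V) = n choose r" using card_Rs[OF fin] assms(6) by simp
  moreover have "(n - k) choose r \<le> card (Rs r V - E)" using m assms(6) by simp
  ultimately show ?thesis by linarith
qed

end
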